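(* For non-negative integers $p_1,p_2$, integers $k_0,k_1,k_2$ and $x_1,x_2,y,z\in\mathbb{C}$, $$\sum_{j_1=0}^{p_1}\sum_{j_2=0}^{p_2}\binom{p_1}{j_1}\binom{p_2}{j_2}B^{(k_1)}_{p_1-j_1}(x_1-y)B^{(k_2)}_{p_2-j_2}(x_2-y)B^{(k_0)}_{j_1+j_2}(y)=\sum_{j_1=0}^{p_1}\sum_{j_2=0}^{p_2}\binom{p_1}{j_1}\binom{p_2}{j_2}B^{(k_1)}_{p_1-j_1}(x_1-z)B^{(k_2)}_{p_2-j_2}(x_2-z)B^{(k_0)}_{j_1+j_2}(z).$$ In particular, for $x\in\mathbb{C}$, $$\sum_{j_1=0}^{p_1}\sum_{j_2=0}^{p_2}\binom{p_1}{j_1}\binom{p_2}{j_2}B^{(k_1)}_{p_1-j_1}B^{(k_2)}_{p_2-j_2}B^{(k_0)}_{j_1+j_2}(x)=\sum_{j_1=0}^{p_1}\sum_{j_2=0}^{p_2}\binom{p_1}{j_1}\binom{p_2}{j_2}B^{(k_1)}_{p_1-j_1}(x)B^{(k_2)}_{p_2-j_2}(x)B^{(k_0)}_{j_1+j_2}.$$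
   Context: For an integer $k$, a non-negative integer $n$ and $x\in\mathbb{C}$, the poly-Bernoulli polynomial is $B_{n}^{(k)}(x)=\sum_{l=0}^{n}\frac{1}{(l+1)^{k}}\sum_{j=0}^{l}(-1)^{j}\binom{l}{j}(j+x)^{n}$, and the poly-Bernoulli number is $B_n^{(k)}=B_n^{(k)}(0)$. *)

theory Defs
  imports Complex_Main
begin

text \<open>Poly-Bernoulli polynomial B_n^(k)(x), for integer k (negative k allowed,
  1/(l+1)^k read as (l+1) powi (-k)).\<close>
definition polyBernPoly :: "int \<Rightarrow> nat \<Rightarrow> complex \<Rightarrow> complex" where
  "polyBernPoly k n x =
     (\<Sum>l=0..n. inverse ((of_nat (l+1) :: complex) powi k) *
        (\<Sum>j=0..l. (-1)^j * of_nat (l choose j) * (of_nat j + x)^n))"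

definition polyBern :: "int \<Rightarrow> nat \<Rightarrow> complex" where
  "polyBern k n = polyBernPoly k n 0"

end

theory Submission
  imports Defs
begin

lemma fd_zero:
  "\<forall>l (u::complex). n < l \<longrightarrow> (\<Sum>j=0..l. (-1)^j * of_nat (l choose j) * (of_nat j + u)^n) = 0"
proof (induction n)
  case 0
  show ?case
  proof (intro allI impI)
    fix l :: nat and u :: complex assume "0 < l"
    then show "(\<Sum>j=0..l. (-1)^j * of_nat (l choose j) * (of_nat j + u)^0) = (0::complex)"
      using choose_alternating_sum[of l, where 'a=complex]
      by (simp add: atLeast0AtMost mult.commute)
  qed
next
  case (Suc n)
  show ?case
  proof (intro allI impI)
    fix l :: nat and u :: complex assume l: "Suc n < l"
    then obtain m where m: "l = Suc m" by (cases l) auto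
    have split: "(\<Sum>j=0..l. (-1)^j * of_nat (l choose j) * (of_nat j + u)^Suc n)
      = (\<Sum>j=0..l. (-1)^j * of_nat (l choose j) * of_nat j * (of_nat j + u)^n)
        + u * (\<Sum>j=0..l. (-1)^j * of_nat (l choose j) * (of_nat j + u)^n)"
      by (simp add: sum_distrib_left sum.distrib[symmetric] algebra_simps)
    have z2: "(\<Sum>j=0..l. (-1)^j * of_nat (l choose j) * (of_nat j + u)^n) = (0::complex)"
      using Suc.IH l by simp
    have "(\<Sum>j=0..l. (-1)^j * of_nat (l choose j) * of_nat j * (of_nat j + u)^n)
        = (\<Sum>j=0..Suc m. (-1)^j * of_nat (Suc m choose j) * of_nat j * (of_nat j + u)^n)"
      using m by simp
    also have "\<dots> = (\<Sum>i=0..m. (-1)^(Suc i) * of_nat (Suc m choose Suc i) * of_nat (Suc i) * (of_nat (Suc i) + u)^n)"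
      by (subst sum.atLeast0_atMost_Suc_shift) simp
    also have "\<dots> = - of_nat l * (\<Sum>i=0..m. (-1)^i * of_nat (m choose i) * (of_nat i + (u+1))^n)"
    proof -
      have e: "\<And>i. of_nat (Suc m choose Suc i) * of_nat (Suc i) = (of_nat (Suc m) * of_nat (m choose i) :: complex)"
        by (metis Suc_times_binomial_eq mult.commute of_nat_mult)
      have "(\<Sum>i=0..m. (-1)^(Suc i) * of_nat (Suc m choose Suc i) * of_nat (Suc i) * (of_nat (Suc i) + u)^n)
          = (\<Sum>i=0..m. - of_nat l * ((-1)^i * of_nat (m choose i) * (of_nat i + (u+1))^n) :: complex)"
      proof (rule sum.cong[OF refl])
        fix i
        have "(-1)^(Suc i) * of_nat (Suc m choose Suc i) * of_nat (Suc i) * (of_nat (Suc i) + u)^n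
           = - ((-1)^i * (of_nat (Suc m choose Suc i) * of_nat (Suc i)) * (of_nat i + (u+1))^n :: complex)"
          by (simp add: algebra_simps)
        also have "\<dots> = - of_nat l * ((-1)^i * of_nat (m choose i) * (of_nat i + (u+1))^n)"
          unfolding e m by (simp add: algebra_simps)
        finally show "(-1)^(Suc i) * of_nat (Suc m choose Suc i) * of_nat (Suc i) * (of_nat (Suc i) + u)^n
          = - of_nat l * ((-1)^i * of_nat (m choose i) * (of_nat i + (u+1))^n :: complex)" .
      qed
      then show ?thesis by (simp add: sum_distrib_left)
    qed
    also have "\<dots> = 0" using Suc.IH l m by simp
    finally show "(\<Sum>j=0..l. (-1)^j * of_nat (l choose j) * (of_nat j + u)^Suc n) = (0::complex)"
      using split z2 by simp
  qed
qed

lemma binom2: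
  fixes a b g :: complex
  shows "(\<Sum>j1=0..p1. \<Sum>j2=0..p2. of_nat (p1 choose j1) * of_nat (p2 choose j2) *
     a^(p1-j1) * b^(p2-j2) * g^(j1+j2)) = (a+g)^p1 * (b+g)^p2"
proof -
  have "(a+g)^p1 * (b+g)^p2 = (\<Sum>j1\<le>p1. of_nat (p1 choose j1) * g^j1 * a^(p1-j1)) *
         (\<Sum>j2\<le>p2. of_nat (p2 choose j2) * g^j2 * b^(p2-j2))"
    by (simp only: add.commute[of a g] add.commute[of b g] binomial_ring)
  also have "\<dots> = (\<Sum>j1=0..p1. \<Sum>j2=0..p2. (of_nat (p1 choose j1) * g^j1 * a^(p1-j1)) *
         (of_nat (p2 choose j2) * g^j2 * b^(p2-j2)))"
    by (simp add: atLeast0AtMost sum_product)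
  also have "\<dots> = (\<Sum>j1=0..p1. \<Sum>j2=0..p2. of_nat (p1 choose j1) * of_nat (p2 choose j2) *
     a^(p1-j1) * b^(p2-j2) * g^(j1+j2))"
    by (simp add: power_add mult_ac)
  finally show ?thesis by simp
qed

definition wt :: "int \<Rightarrow> nat \<Rightarrow> nat \<Rightarrow> complex" where
  "wt k l j = inverse ((of_nat (l+1) :: complex) powi k) * ((-1)^j * of_nat (l choose j))"

lemma ext:
  assumes "n \<le> N"
  shows "polyBernPoly k n u = (\<Sum>p\<in>Sigma {0..N} (\<lambda>l. {0..l}). wt k (fst p) (snd p) * (of_nat (snd p) + u)^n)"
proof -
  have "polyBernPoly k n u = (\<Sum>l=0..N. inverse ((of_nat (l+1) :: complex) powi k) *
        (\<Sum>j=0..l. (-1)^j * of_nat (l choose j) * (of_nat j + u)^n))"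
    unfolding polyBernPoly_def
    by (rule sum.mono_neutral_right[symmetric]) (use assms fd_zero in auto)
  also have "\<dots> = (\<Sum>l=0..N. \<Sum>j=0..l. wt k l j * (of_nat j + u)^n)"
    by (simp add: wt_def sum_distrib_left mult_ac)
  also have "\<dots> = (\<Sum>p\<in>Sigma {0..N} (\<lambda>l. {0..l}). wt k (fst p) (snd p) * (of_nat (snd p) + u)^n)"
    by (subst sum.Sigma) (auto simp: split_def)
  finally show ?thesis .
qed

lemma swap3:
  "(\<Sum>a\<in>A. \<Sum>b\<in>B. \<Sum>c\<in>C. H a b c) = (\<Sum>c\<in>C. \<Sum>a\<in>A. \<Sum>b\<in>B. H a b c)"
proof -
  have "(\<Sum>a\<in>A. \<Sum>b\<in>B. \<Sum>c\<in>C. H a b c) = (\<Sum>a\<in>A. \<Sum>c\<in>C. \<Sum>b\<in>B. H a b c)"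
    by (rule sum.cong[OF refl], rule sum.swap)
  also have "\<dots> = (\<Sum>c\<in>C. \<Sum>a\<in>A. \<Sum>b\<in>B. H a b c)" by (rule sum.swap)
  finally show ?thesis .
qed

lemma core:
  fixes I :: "'i set" and t cA cB cC :: "'i \<Rightarrow> complex"
    and PA PB PC :: "nat \<Rightarrow> complex \<Rightarrow> complex"
  assumes fin: "finite I"
  and h1: "\<And>n u. n \<le> M \<Longrightarrow> PA n u = (\<Sum>i\<in>I. cA i * (t i + u)^n)"
  and h2: "\<And>n u. n \<le> M \<Longrightarrow> PB n u = (\<Sum>i\<in>I. cB i * (t i + u)^n)"
  and h0: "\<And>n u. n \<le> M \<Longrightarrow> PC n u = (\<Sum>i\<in>I. cC i * (t i + u)^n)"
  and M: "p1 + p2 \<le> M"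
  shows "(\<Sum>j1=0..p1. \<Sum>j2=0..p2. of_nat (p1 choose j1) * of_nat (p2 choose j2) *
            PA (p1 - j1) (x1 - y) * PB (p2 - j2) (x2 - y) * PC (j1 + j2) y)
    = (\<Sum>i0\<in>I. \<Sum>i2\<in>I. \<Sum>i1\<in>I. cA i1 * cB i2 * cC i0 *
            ((t i1 + x1) + t i0)^p1 * ((t i2 + x2) + t i0)^p2)"
proof -
  let ?F = "\<lambda>j1 j2 i1 i2 i0. of_nat (p1 choose j1) * of_nat (p2 choose j2) *
     (cA i1 * (t i1 + (x1 - y))^(p1-j1)) * (cB i2 * (t i2 + (x2 - y))^(p2-j2)) *
     (cC i0 * (t i0 + y)^(j1+j2))"
  have s1: "(\<Sum>j1=0..p1. \<Sum>j2=0..p2. of_nat (p1 choose j1) * of_nat (p2 choose j2) *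
            PA (p1 - j1) (x1 - y) * PB (p2 - j2) (x2 - y) * PC (j1 + j2) y)
      = (\<Sum>j1=0..p1. \<Sum>j2=0..p2. \<Sum>i0\<in>I. \<Sum>i2\<in>I. \<Sum>i1\<in>I. ?F j1 j2 i1 i2 i0)"
  proof (intro sum.cong refl)
    fix j1 j2 assume j: "j1 \<in> {0..p1}" "j2 \<in> {0..p2}"
    then have "p1 - j1 \<le> M" "p2 - j2 \<le> M" "j1 + j2 \<le> M" using M by auto
    then show "of_nat (p1 choose j1) * of_nat (p2 choose j2) *
            PA (p1 - j1) (x1 - y) * PB (p2 - j2) (x2 - y) * PC (j1 + j2) y
       = (\<Sum>i0\<in>I. \<Sum>i2\<in>I. \<Sum>i1\<in>I. ?F j1 j2 i1 i2 i0)"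
      by (simp add: h1 h2 h0 sum_distrib_left sum_distrib_right mult.assoc)
  qed
  have s2: "(\<Sum>j1=0..p1. \<Sum>j2=0..p2. \<Sum>i0\<in>I. \<Sum>i2\<in>I. \<Sum>i1\<in>I. ?F j1 j2 i1 i2 i0)
      = (\<Sum>i0\<in>I. \<Sum>i2\<in>I. \<Sum>i1\<in>I. \<Sum>j1=0..p1. \<Sum>j2=0..p2. ?F j1 j2 i1 i2 i0)"
    apply (rule trans[OF swap3])
    apply (rule sum.cong[OF refl])
    apply (rule trans[OF swap3])
    apply (rule sum.cong[OF refl])
    apply (rule swap3)
    done
  have s3: "\<And>i0 i2 i1. (\<Sum>j1=0..p1. \<Sum>j2=0..p2. ?F j1 j2 i1 i2 i0) =
     cA i1 * cB i2 * cC i0 * ((t i1 + x1) + t i0)^p1 * ((t i2 + x2) + t i0)^p2"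
  proof -
    fix i0 i2 i1
    have "(\<Sum>j1=0..p1. \<Sum>j2=0..p2. ?F j1 j2 i1 i2 i0) = cA i1 * cB i2 * cC i0 *
       (\<Sum>j1=0..p1. \<Sum>j2=0..p2. of_nat (p1 choose j1) * of_nat (p2 choose j2) *
     (t i1 + (x1 - y))^(p1-j1) * (t i2 + (x2 - y))^(p2-j2) * (t i0 + y)^(j1+j2))"
      by (simp add: sum_distrib_left mult_ac)
    also have "\<dots> = cA i1 * cB i2 * cC i0 * ((t i1 + (x1 - y)) + (t i0 + y))^p1 * ((t i2 + (x2 - y)) + (t i0 + y))^p2"
      unfolding binom2 by (simp only: mult.assoc)
    also have "\<dots> = cA i1 * cB i2 * cC i0 * ((t i1 + x1) + t i0)^p1 * ((t i2 + x2) + t i0)^p2"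
      by (simp add: algebra_simps)
    finally show "(\<Sum>j1=0..p1. \<Sum>j2=0..p2. ?F j1 j2 i1 i2 i0) =
     cA i1 * cB i2 * cC i0 * ((t i1 + x1) + t i0)^p1 * ((t i2 + x2) + t i0)^p2" .
  qed
  show ?thesis unfolding s1 s2 s3 ..
qed
theorem mainTheorem10:
  fixes p1 p2 :: nat and k0 k1 k2 :: int and x1 x2 y z x :: complex
  shows "((\<Sum>j1=0..p1. \<Sum>j2=0..p2. of_nat (p1 choose j1) * of_nat (p2 choose j2) *
            polyBernPoly k1 (p1 - j1) (x1 - y) * polyBernPoly k2 (p2 - j2) (x2 - y) *
            polyBernPoly k0 (j1 + j2) y)
       = (\<Sum>j1=0..p1. \<Sum>j2=0..p2. of_nat (p1 choose j1) * of_nat (p2 choose j2) *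
            polyBernPoly k1 (p1 - j1) (x1 - z) * polyBernPoly k2 (p2 - j2) (x2 - z) *
            polyBernPoly k0 (j1 + j2) z)) \<and>
         ((\<Sum>j1=0..p1. \<Sum>j2=0..p2. of_nat (p1 choose j1) * of_nat (p2 choose j2) *
            polyBern k1 (p1 - j1) * polyBern k2 (p2 - j2) * polyBernPoly k0 (j1 + j2) x)
       = (\<Sum>j1=0..p1. \<Sum>j2=0..p2. of_nat (p1 choose j1) * of_nat (p2 choose j2) *
            polyBernPoly k1 (p1 - j1) x * polyBernPoly k2 (p2 - j2) x * polyBern k0 (j1 + j2)))"
proof -
  define R where "R = (\<lambda>x1 x2. (\<Sum>i0\<in>Sigma {0..p1+p2} (\<lambda>l. {0..l}). \<Sum>i2\<in>Sigma {0..p1+p2} (\<lambda>l. {0..l}). \<Sum>i1\<in>Sigma {0..p1+p2} (\<lambda>l. {0..l}).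
     wt k1 (fst i1) (snd i1) * wt k2 (fst i2) (snd i2) * wt k0 (fst i0) (snd i0) *
     ((of_nat (snd i1) + x1) + of_nat (snd i0))^p1 * ((of_nat (snd i2) + x2) + of_nat (snd i0))^p2))"
  have key: "\<And>a b c. (\<Sum>j1=0..p1. \<Sum>j2=0..p2. of_nat (p1 choose j1) * of_nat (p2 choose j2) *
            polyBernPoly k1 (p1 - j1) (a - c) * polyBernPoly k2 (p2 - j2) (b - c) *
            polyBernPoly k0 (j1 + j2) c) = R a b"
    unfolding R_def
    by (rule core[where PA="polyBernPoly k1" and PB="polyBernPoly k2" and PC="polyBernPoly k0"
         and cA="\<lambda>p. wt k1 (fst p) (snd p)" and cB="\<lambda>p. wt k2 (fst p) (snd p)"
         and cC="\<lambda>p. wt k0 (fst p) (snd p)" and t="\<lambda>p. of_nat (snd p)" and M="p1+p2"])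
       (auto intro: ext)
  have a: "(\<Sum>j1=0..p1. \<Sum>j2=0..p2. of_nat (p1 choose j1) * of_nat (p2 choose j2) *
            polyBern k1 (p1 - j1) * polyBern k2 (p2 - j2) * polyBernPoly k0 (j1 + j2) x) = R x x"
    using key[where a=x and b=x and c=x] by (simp add: polyBern_def)
  have b: "(\<Sum>j1=0..p1. \<Sum>j2=0..p2. of_nat (p1 choose j1) * of_nat (p2 choose j2) *
            polyBernPoly k1 (p1 - j1) x * polyBernPoly k2 (p2 - j2) x * polyBern k0 (j1 + j2)) = R x x"
    using key[where a=x and b=x and c=0] by (simp add: polyBern_def)
  show ?thesis using key a b by simp
qed

end
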